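(* Let $f$ and $g$ be germs at $0\in\mathbb{C}$ of holomorphic functions of one variable with $v(f)\geq 3$ and $v(g)\geq 2$, and let $I=\big(f(z_1)-z_2z_3,\,g(z_2)\big)\subset\mathcal{O}_3$. Then $\mathbf{T}_2(I)\leq\max\{v(f),v(g)\}$ and $\beta_2(I)=\max\{v(f),\,v(g)(v(f)-1)\}=v(g)(v(f)-1)$.
   Context: $\mathcal{O}_n$ denotes the local ring of germs at $0\in\mathbb{C}^n$ of holomorphic functions. $\Gamma$ denotes the set of non-constant germs of holomorphic maps $z\colon(\mathbb{C},0)\to(\mathbb{C}^n,0)$; $v(z)$ is the order of vanishing of $z$ at $0$; for a one-variable germ $h$, $v(h)$ is its order of vanishing at $0$ ($v(0)=\infty$). For an ideal $I\subset\mathcal{O}_n$, $\mathbf{T}_1(I)=\sup_{z\in\Gamma}\inf_{h\in I}\frac{v(h\circ z)}{v(z)}$, and $\mathbf{T}_q(I)=\inf_{\{w_1,\dots,w_{q-1}\}}\mathbf{T}_1(I,w_1,\dots,w_{q-1})$ over all linear functions $w_j$, where $(I,w_1,\dots,w_{q-1})$ is the ideal generated by $I$ and the $w_j$. The generic value $\beta_q(I)$ is the unique $\beta\in\mathbb{R}\cup\{\infty\}$ such that there is a non-empty Zariski open subset $W$ of the Grassmannian $G^{n-q+1}$ of $(n-q+1)$-dimensional linear subspaces of $\mathbb{C}^n$ with $\mathbf{T}_1(I,w_1,\dots,w_{q-1})=\beta$ whenever $\{w_1=\dots=w_{q-1}=0\}\in W$. *)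

theory Defs
  imports "HOL-Analysis.Analysis"
begin

text \<open>Order of vanishing at 0 of a one-variable function (meant for functions holomorphic
  near 0): the least k with a non-zero k-th derivative at 0, and \<infinity> if there is none
  (i.e. the germ is 0).\<close>
definition ord0 :: "(complex \<Rightarrow> complex) \<Rightarrow> enat" where
  "ord0 h = (if \<exists>k. (deriv ^^ k) h 0 \<noteq> 0
             then enat (LEAST k. (deriv ^^ k) h 0 \<noteq> 0) else \<infinity>)"

definition holo1_near0 :: "(complex \<Rightarrow> complex) \<Rightarrow> bool" where
  "holo1_near0 h \<longleftrightarrow> (\<exists>r>0. h holomorphic_on ball 0 r)"

text \<open>A function on C^n that is holomorphic near 0: complex differentiable
  (real Frechet derivative that is complex linear) at every point of a ball around 0.
  Such functions represent the elements of O_n.\<close>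
definition holo_near0 :: "(complex^'n \<Rightarrow> complex) \<Rightarrow> bool" where
  "holo_near0 h \<longleftrightarrow> (\<exists>r>0. \<forall>x\<in>ball 0 r. \<exists>D. (h has_derivative D) (at x) \<and>
                                      (\<forall>c v. D (c *s v) = c * D v))"

definition curves :: "(complex \<Rightarrow> complex^'n) set" where
  "curves = {z. z 0 = 0 \<and> (\<forall>j. holo1_near0 (\<lambda>t. z t $ j)) \<and> (\<exists>j. ord0 (\<lambda>t. z t $ j) \<noteq> \<infinity>)}"

definition ordc :: "(complex \<Rightarrow> complex^'n) \<Rightarrow> enat" where
  "ordc z = Min (range (\<lambda>j. ord0 (\<lambda>t. z t $ j)))"

definition gen_ideal :: "(complex^'n \<Rightarrow> complex) set \<Rightarrow> (complex^'n \<Rightarrow> complex) set" where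
  "gen_ideal G = {h. \<exists>gs as. length as = length gs \<and> set gs \<subseteq> G \<and> (\<forall>a\<in>set as. holo_near0 a) \<and>
       (\<exists>r>0. \<forall>x\<in>ball 0 r. h x = (\<Sum>i<length gs. (as ! i) x * (gs ! i) x))}"

definition linf :: "complex^'n \<Rightarrow> complex^'n \<Rightarrow> complex" where
  "linf c x = (\<Sum>j\<in>UNIV. c $ j * x $ j)"

definition T1 :: "(complex^'n \<Rightarrow> complex) set \<Rightarrow> ereal" where
  "T1 I = (SUP z\<in>curves. INF h\<in>I. ereal_of_enat (ord0 (h \<circ> z)) / ereal_of_enat (ordc z))"

definition add_lin :: "(complex^'n \<Rightarrow> complex) set \<Rightarrow> nat \<Rightarrow> (nat \<Rightarrow> complex^'n)
                         \<Rightarrow> (complex^'n \<Rightarrow> complex) set" where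
  "add_lin I k ws = gen_ideal (I \<union> {linf (ws i) | i. i < k})"

definition Tq :: "nat \<Rightarrow> (complex^'n \<Rightarrow> complex) set \<Rightarrow> ereal" where
  "Tq q I = (INF ws. T1 (add_lin I (q - 1) ws))"

definition lin_indep :: "nat \<Rightarrow> (nat \<Rightarrow> complex^'n) \<Rightarrow> bool" where
  "lin_indep k ws \<longleftrightarrow> (\<forall>c::nat \<Rightarrow> complex. (\<Sum>i<k. c i *s ws i) = 0 \<longrightarrow> (\<forall>i<k. c i = 0))"

definition zero_space :: "nat \<Rightarrow> (nat \<Rightarrow> complex^'n) \<Rightarrow> (complex^'n) set" where
  "zero_space k ws = {x. \<forall>i<k. linf (ws i) x = 0}"

text \<open>Grassmannian G^{n-k} of (n-k)-dimensional linear subspaces of C^n, each written as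
  the zero set of k independent linear forms.\<close>
definition grass :: "nat \<Rightarrow> (complex^'n) set set" where
  "grass k = {zero_space k ws | ws. lin_indep k ws}"

definition tuple_poly :: "nat \<Rightarrow> ((nat \<Rightarrow> complex^'n) \<Rightarrow> complex) \<Rightarrow> bool" where
  "tuple_poly k P \<longleftrightarrow> (\<exists>A c. finite A \<and>
      (\<forall>ws. P ws = (\<Sum>\<alpha>\<in>A. c \<alpha> * (\<Prod>i<k. \<Prod>j\<in>UNIV. (ws i $ j) ^ (\<alpha> i j)))))"

text \<open>A subset W of the Grassmannian is Zariski open iff its preimage in the (Zariski open)
  set of independent k-tuples is Zariski open, i.e. iff the set of k-tuples that are
  dependent or whose zero space is not in W is an algebraic subset of (C^n)^k.\<close>
definition zariski_open_grass :: "nat \<Rightarrow> (complex^'n) set set \<Rightarrow> bool" where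
  "zariski_open_grass k W \<longleftrightarrow> W \<subseteq> grass k \<and>
     (\<exists>F. (\<forall>P\<in>F. tuple_poly k P) \<and>
          (\<forall>ws. (\<not> lin_indep k ws \<or> zero_space k ws \<notin> W) \<longleftrightarrow> (\<forall>P\<in>F. P ws = 0)))"

definition is_generic_value :: "nat \<Rightarrow> (complex^'n \<Rightarrow> complex) set \<Rightarrow> ereal \<Rightarrow> bool" where
  "is_generic_value q I \<beta> \<longleftrightarrow> (\<exists>W. W \<noteq> {} \<and> zariski_open_grass (q - 1) W \<and>
      (\<forall>ws. lin_indep (q - 1) ws \<and> zero_space (q - 1) ws \<in> W \<longrightarrow> T1 (add_lin I (q - 1) ws) = \<beta>))"

definition beta :: "nat \<Rightarrow> (complex^'n \<Rightarrow> complex) set \<Rightarrow> ereal" where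
  "beta q I = (THE \<beta>. is_generic_value q I \<beta>)"

end

theory Submission
  imports Defs "HOL-Complex_Analysis.Complex_Analysis"
begin

definition ordge :: "(complex \<Rightarrow> complex) \<Rightarrow> nat \<Rightarrow> bool" where
  "ordge u K \<longleftrightarrow> (\<exists>r>0. \<exists>v. v holomorphic_on ball 0 r \<and> (\<forall>t\<in>ball 0 r. u t = t^K * v t))"

definition ordex :: "(complex \<Rightarrow> complex) \<Rightarrow> nat \<Rightarrow> bool" where
  "ordex u K \<longleftrightarrow> (\<exists>r>0. \<exists>v. v holomorphic_on ball 0 r \<and> v 0 \<noteq> 0 \<and> (\<forall>t\<in>ball 0 r. u t = t^K * v t))"

lemma deriv_factor:
  assumes r: "r > 0" and v: "v holomorphic_on ball 0 r" and u: "\<forall>t\<in>ball 0 r. u t = t^K * v t"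
  shows "i \<le> K \<Longrightarrow> (deriv^^i) u 0 = (if i = K then fact K * v 0 else 0)"
proof -
  assume iK: "i \<le> K"
  have ev: "eventually (\<lambda>x. u x = x^K * v x) (nhds 0)"
    unfolding eventually_nhds by (intro exI[of _ "ball 0 r"]) (use u r in auto)
  have "(deriv^^i) u 0 = (deriv^^i) (\<lambda>w. w^K * v w) 0"
    by (rule higher_deriv_cong_ev[OF ev refl])
  also have "\<dots> = (\<Sum>j = 0..i. of_nat (i choose j) * (deriv ^^ j) (\<lambda>w. w^K) 0 * (deriv ^^ (i-j)) v 0)"
    by (rule higher_deriv_mult[of _ "ball 0 r"]) (use v r in \<open>auto intro!: holomorphic_intros\<close>)
  also have "\<dots> = (\<Sum>j = 0..i. if j = K then fact K * v 0 else 0)"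
  proof (intro sum.cong refl)
    fix j assume j: "j \<in> {0..i}"
    have "(deriv ^^ j) (\<lambda>w. w^K) 0 = pochhammer (of_nat (Suc K - j)) j * (0-0::complex) ^ (K - j)"
      using higher_deriv_power[of j 0 K 0] by simp
    then show "of_nat (i choose j) * (deriv ^^ j) (\<lambda>w. w^K) 0 * (deriv ^^ (i-j)) v 0 = (if j = K then fact K * v 0 else 0)"
      using j iK by (auto simp: pochhammer_fact)
  qed
  also have "\<dots> = (if i = K then fact K * v 0 else 0)"
    using iK by (auto simp: sum.delta)
  finally show ?thesis .
qed

lemma ord0_ge:
  assumes "ordge u K" shows "enat K \<le> ord0 u"
proof -
  obtain r v where r: "r > 0" and v: "v holomorphic_on ball 0 r" and u: "\<forall>t\<in>ball 0 r. u t = t^K * v t"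
    using assms unfolding ordge_def by blast
  have z: "(deriv^^i) u 0 = 0" if "i < K" for i
    using deriv_factor[OF r v u, of i] that by simp
  show ?thesis
  proof (cases "\<exists>k. (deriv ^^ k) u 0 \<noteq> 0")
    case True
    then have "(deriv ^^ (LEAST k. (deriv ^^ k) u 0 \<noteq> 0)) u 0 \<noteq> 0" by (rule LeastI_ex)
    then have "K \<le> (LEAST k. (deriv ^^ k) u 0 \<noteq> 0)" using z not_le by blast
    then show ?thesis using True by (simp add: ord0_def)
  qed (simp add: ord0_def)
qed

lemma ord0_ex:
  assumes "ordex u K" shows "ord0 u = enat K"
proof -
  obtain r v where r: "r > 0" and v: "v holomorphic_on ball 0 r" and v0: "v 0 \<noteq> 0" and u: "\<forall>t\<in>ball 0 r. u t = t^K * v t"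
    using assms unfolding ordex_def by blast
  have z: "(deriv^^i) u 0 = 0" if "i < K" for i
    using deriv_factor[OF r v u, of i] that by simp
  have nz: "(deriv^^K) u 0 \<noteq> 0"
    using deriv_factor[OF r v u, of K] v0 by simp
  have "(LEAST k. (deriv ^^ k) u 0 \<noteq> 0) = K"
    by (rule Least_equality) (use nz z not_le in auto)
  then show ?thesis using nz by (auto simp: ord0_def)
qed

lemma ord0_fact:
  assumes r: "r > 0" and hol: "u holomorphic_on ball 0 r" and K: "enat K \<le> ord0 u"
  shows "ordge u K"
proof (cases "\<exists>k. (deriv ^^ k) u 0 \<noteq> 0")
  case False
  have "u w = 0" if "w \<in> ball 0 r" for w
  proof -
    have "((\<lambda>n. (deriv ^^ n) u 0 / (fact n) * (w-0)^n) sums u w)"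
      by (rule holomorphic_power_series[OF hol that])
    then have "(\<lambda>n. 0) sums u w" using False by simp
    then show ?thesis using sums_unique sums_zero by (metis sums_unique2)
  qed
  then show ?thesis unfolding ordge_def
    by (intro exI[of _ r] conjI r exI[of _ "\<lambda>_. 0"]) auto
next
  case True
  define k where "k = (LEAST k. (deriv ^^ k) u 0 \<noteq> 0)"
  have nz: "(deriv ^^ k) u 0 \<noteq> 0" unfolding k_def using True by (rule LeastI_ex)
  have z: "(deriv ^^ i) u 0 = 0" if "i < k" for i using that unfolding k_def using not_less_Least[of i "\<lambda>k. (deriv ^^ k) u 0 \<noteq> 0"] by blast
  have Kk: "K \<le> k" using K True by (simp add: ord0_def k_def)
  show ?thesis
  proof (cases "k = 0")
    case True
    then show ?thesis using Kk r hol unfolding ordge_def by (intro exI[of _ r] conjI r exI[of _ u]) auto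
  next
    case False
    obtain g r' where r': "0 < r'" and g: "g holomorphic_on ball 0 r'"
       and fac: "\<And>w. w \<in> ball 0 r' \<Longrightarrow> u w - u 0 = (w - 0)^k * g w"
    proof (rule holomorphic_factor_order_of_zero[OF hol open_ball _ _ nz])
      show "0 \<in> ball 0 r" using r by simp
      show "0 < k" using False by simp
      show "\<And>i. 0 < i \<Longrightarrow> i < k \<Longrightarrow> (deriv ^^ i) u 0 = 0" using z by simp
    qed (use that in blast)
    have u0: "u 0 = 0" using z[of 0] False by simp
    show ?thesis unfolding ordge_def
    proof (intro exI[of _ r'] conjI r' exI[of _ "\<lambda>w. w^(k-K) * g w"] ballI)
      show "(\<lambda>w. w^(k-K) * g w) holomorphic_on ball 0 r'" using g by (auto intro!: holomorphic_intros)
      fix t :: complex assume "t \<in> ball 0 r'"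
      then have "u t = t^k * g t" using fac u0 by simp
      also have "\<dots> = t^K * (t^(k-K) * g t)" using Kk by (simp add: power_add[symmetric])
      finally show "u t = t^K * (t^(k-K) * g t)" .
    qed
  qed
qed

lemma ord0_exact:
  assumes r: "r > 0" and hol: "u holomorphic_on ball 0 r" and K: "ord0 u = enat K"
  shows "ordex u K"
proof -
  have True: "\<exists>k. (deriv ^^ k) u 0 \<noteq> 0" using K by (auto simp: ord0_def split: if_splits)
  define k where "k = (LEAST k. (deriv ^^ k) u 0 \<noteq> 0)"
  have nz: "(deriv ^^ k) u 0 \<noteq> 0" unfolding k_def using True by (rule LeastI_ex)
  have z: "(deriv ^^ i) u 0 = 0" if "i < k" for i using that unfolding k_def using not_less_Least[of i "\<lambda>k. (deriv ^^ k) u 0 \<noteq> 0"] by blast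
  have Kk: "K = k" using K True by (simp add: ord0_def k_def)
  show ?thesis
  proof (cases "k = 0")
    case True
    then show ?thesis using Kk r hol nz unfolding ordex_def by (intro exI[of _ r] conjI r exI[of _ u]) auto
  next
    case False
    obtain g r' where r': "0 < r'" and g: "g holomorphic_on ball 0 r'"
       and fac: "\<And>w. w \<in> ball 0 r' \<Longrightarrow> u w - u 0 = (w - 0)^k * g w"
       and gnz: "\<And>w. w \<in> ball 0 r' \<Longrightarrow> g w \<noteq> 0"
    proof (rule holomorphic_factor_order_of_zero[OF hol open_ball _ _ nz])
      show "0 \<in> ball 0 r" using r by simp
      show "0 < k" using False by simp
      show "\<And>i. 0 < i \<Longrightarrow> i < k \<Longrightarrow> (deriv ^^ i) u 0 = 0" using z by simp
    qed (use that in blast)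
    have u0: "u 0 = 0" using z[of 0] False by simp
    show ?thesis unfolding ordex_def
      by (intro exI[of _ r'] conjI r' exI[of _ g] ballI g gnz) (use fac u0 r' Kk in auto)
  qed
qed

lemma ball_min: "t \<in> ball (0::complex) (min r1 r2) \<Longrightarrow> t \<in> ball 0 r1 \<and> t \<in> ball 0 r2"
  by auto

lemma ordge_cong:
  assumes "ordge u K" "r > 0" "\<forall>t\<in>ball 0 r. u' t = u t" shows "ordge u' K"
proof -
  obtain r1 v where r1: "r1 > 0" and v: "v holomorphic_on ball 0 r1" and u: "\<forall>t\<in>ball 0 r1. u t = t^K * v t"
    using assms unfolding ordge_def by blast
  show ?thesis unfolding ordge_def
    by (intro exI[of _ "min r r1"] conjI exI[of _ v] ballI)
       (use assms r1 u in \<open>auto intro: holomorphic_on_subset[OF v]\<close>)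
qed

lemma ordge_mono:
  assumes "ordge u K" "K' \<le> K" shows "ordge u K'"
proof -
  obtain r1 v where r1: "r1 > 0" and v: "v holomorphic_on ball 0 r1" and u: "\<forall>t\<in>ball 0 r1. u t = t^K * v t"
    using assms unfolding ordge_def by blast
  show ?thesis unfolding ordge_def
  proof (intro exI[of _ r1] conjI r1 exI[of _ "\<lambda>t. t^(K-K') * v t"] ballI)
    show "(\<lambda>t. t^(K-K') * v t) holomorphic_on ball 0 r1" using v by (auto intro!: holomorphic_intros)
    fix t :: complex assume "t \<in> ball 0 r1"
    then show "u t = t^K' * (t^(K-K') * v t)" using u assms(2) by (simp add: mult.assoc[symmetric] power_add[symmetric])
  qed
qed

lemma ordge_zero: "ordge (\<lambda>_. 0) K"
  unfolding ordge_def by (intro exI[of _ 1] conjI exI[of _ "\<lambda>_. 0"]) auto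

lemma ordge_add:
  assumes "ordge u K" "ordge u' K" shows "ordge (\<lambda>t. u t + u' t) K"
proof -
  obtain r1 v where r1: "r1 > 0" and v: "v holomorphic_on ball 0 r1" and u: "\<forall>t\<in>ball 0 r1. u t = t^K * v t"
    using assms unfolding ordge_def by blast
  obtain r2 v' where r2: "r2 > 0" and v': "v' holomorphic_on ball 0 r2" and u': "\<forall>t\<in>ball 0 r2. u' t = t^K * v' t"
    using assms unfolding ordge_def by blast
  show ?thesis unfolding ordge_def
  proof (intro exI[of _ "min r1 r2"] conjI exI[of _ "\<lambda>t. v t + v' t"] ballI)
    show "(\<lambda>t. v t + v' t) holomorphic_on ball 0 (min r1 r2)"
      by (intro holomorphic_intros holomorphic_on_subset[OF v] holomorphic_on_subset[OF v']) auto
    fix t :: complex assume "t \<in> ball 0 (min r1 r2)"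
    then show "u t + u' t = t^K * (v t + v' t)" using u u' by (simp add: distrib_left)
  qed (use r1 r2 in auto)
qed

lemma ordge_mult:
  assumes "ordge u K" "r > 0" "c holomorphic_on ball 0 r" shows "ordge (\<lambda>t. c t * u t) K"
proof -
  obtain r1 v where r1: "r1 > 0" and v: "v holomorphic_on ball 0 r1" and u: "\<forall>t\<in>ball 0 r1. u t = t^K * v t"
    using assms unfolding ordge_def by blast
  show ?thesis unfolding ordge_def
  proof (intro exI[of _ "min r r1"] conjI exI[of _ "\<lambda>t. c t * v t"] ballI)
    show "(\<lambda>t. c t * v t) holomorphic_on ball 0 (min r r1)"
      by (intro holomorphic_intros holomorphic_on_subset[OF v] holomorphic_on_subset[OF assms(3)]) auto
    fix t :: complex assume "t \<in> ball 0 (min r r1)"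
    then show "c t * u t = t^K * (c t * v t)" using u by (simp add: algebra_simps)
  qed (use r1 assms in auto)
qed

lemma ordge_sum:
  assumes "finite S" "\<And>i. i \<in> S \<Longrightarrow> ordge (f i) K" shows "ordge (\<lambda>t. \<Sum>i\<in>S. f i t) K"
  using assms
proof (induction S rule: finite_induct)
  case empty then show ?case using ordge_zero by simp
next
  case (insert x F)
  then show ?case using ordge_add[of "f x" K "\<lambda>t. \<Sum>i\<in>F. f i t"] by simp
qed

lemma compose_fac:
  assumes rg: "rg > 0" and phi: "\<phi> holomorphic_on ball 0 rg" and gfac: "\<forall>s\<in>ball 0 rg. g s = s^q * \<phi> s"
    and ru: "ru > 0" and V: "V holomorphic_on ball 0 ru" and ufac: "\<forall>t\<in>ball 0 ru. u t = t^k * V t"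
    and k: "k > 0"
  shows "\<exists>r>0. (\<lambda>t. V t^q * \<phi> (u t)) holomorphic_on ball 0 r \<and>
          (\<forall>t\<in>ball 0 r. g (u t) = t^(q*k) * (V t^q * \<phi> (u t)))"
proof -
  have uh: "u holomorphic_on ball 0 ru"
    by (rule holomorphic_transform[of "\<lambda>t. t^k * V t"]) (use V ufac in \<open>auto intro!: holomorphic_intros\<close>)
  then have uc: "continuous_on (ball 0 ru) u" by (rule holomorphic_on_imp_continuous_on)
  have op: "open (ball 0 ru \<inter> u -` ball 0 rg)"
    by (rule continuous_open_preimage[OF uc]) auto
  have u0: "u 0 = 0" using ufac ru k by auto
  have "0 \<in> ball 0 ru \<inter> u -` ball 0 rg" using u0 ru rg by auto
  then obtain r where r: "r > 0" and sub: "ball 0 r \<subseteq> ball 0 ru \<inter> u -` ball 0 rg"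
    using op openE by blast
  have "(\<lambda>t. V t^q * \<phi> (u t)) holomorphic_on ball 0 r"
  proof (intro holomorphic_intros)
    show "V holomorphic_on ball 0 r" using sub by (intro holomorphic_on_subset[OF V]) auto
    have "(\<phi> \<circ> u) holomorphic_on ball 0 r"
      by (rule holomorphic_on_compose_gen[OF holomorphic_on_subset[OF uh] phi]) (use sub in auto)
    then show "(\<lambda>t. \<phi> (u t)) holomorphic_on ball 0 r" by (simp add: o_def)
  qed
  moreover have "\<forall>t\<in>ball 0 r. g (u t) = t^(q*k) * (V t^q * \<phi> (u t))"
  proof
    fix t :: complex assume t: "t \<in> ball 0 r"
    then have "u t \<in> ball 0 rg" "t \<in> ball 0 ru" using sub by auto
    then have "g (u t) = (t^k * V t)^q * \<phi> (u t)" using gfac ufac by simp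
    also have "\<dots> = t^(q*k) * (V t^q * \<phi> (u t))"
      by (simp add: power_mult_distrib power_mult[symmetric] mult.commute)
    finally show "g (u t) = t^(q*k) * (V t^q * \<phi> (u t))" .
  qed
  ultimately show ?thesis using r by blast
qed

lemma ordex_compose:
  assumes "ordex g q" "ordex u k" "k > 0" shows "ordex (\<lambda>t. g (u t)) (q*k)"
proof -
  obtain rg \<phi> where rg: "rg > 0" and phi: "\<phi> holomorphic_on ball 0 rg" and p0: "\<phi> 0 \<noteq> 0"
      and gfac: "\<forall>s\<in>ball 0 rg. g s = s^q * \<phi> s"
    using assms unfolding ordex_def by blast
  obtain ru V where ru: "ru > 0" and V: "V holomorphic_on ball 0 ru" and V0: "V 0 \<noteq> 0"
      and ufac: "\<forall>t\<in>ball 0 ru. u t = t^k * V t"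
    using assms unfolding ordex_def by blast
  obtain r where r: "r > 0" and h: "(\<lambda>t. V t^q * \<phi> (u t)) holomorphic_on ball 0 r"
     and e: "\<forall>t\<in>ball 0 r. g (u t) = t^(q*k) * (V t^q * \<phi> (u t))"
    using compose_fac[OF rg phi gfac ru V ufac assms(3)] by blast
  have "u 0 = 0" using ufac ru assms(3) by auto
  then show ?thesis unfolding ordex_def
    by (intro exI[of _ r] conjI r exI[of _ "\<lambda>t. V t^q * \<phi> (u t)"] h e) (use V0 p0 in simp)
qed

lemma ordge_compose:
  assumes "ordge g q" "ordge u k" "k > 0" shows "ordge (\<lambda>t. g (u t)) (q*k)"
proof -
  obtain rg \<phi> where rg: "rg > 0" and phi: "\<phi> holomorphic_on ball 0 rg"
      and gfac: "\<forall>s\<in>ball 0 rg. g s = s^q * \<phi> s"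
    using assms unfolding ordge_def by blast
  obtain ru V where ru: "ru > 0" and V: "V holomorphic_on ball 0 ru"
      and ufac: "\<forall>t\<in>ball 0 ru. u t = t^k * V t"
    using assms unfolding ordge_def by blast
  show ?thesis
    using compose_fac[OF rg phi gfac ru V ufac assms(3)] unfolding ordge_def by blast
qed

lemma ordex_imp_ordge: "ordex u K \<Longrightarrow> ordge u K"
  unfolding ordex_def ordge_def by blast

lemma holo1_ball: "holo1_near0 h \<Longrightarrow> (\<exists>r>0. h holomorphic_on ball 0 r)"
  by (simp add: holo1_near0_def)

lemma curve_small:
  fixes z :: "complex \<Rightarrow> complex^'n"
  assumes z0: "z 0 = 0" and hz: "\<And>j. (\<lambda>t. z t $ j) holomorphic_on ball 0 rz" and rz: "rz > 0" and r: "r > 0"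
  shows "\<exists>r'>0. r' \<le> rz \<and> (\<forall>t\<in>ball 0 r'. z t \<in> ball 0 r)"
proof -
  have "continuous_on (ball 0 rz) (\<lambda>t. \<chi> j. z t $ j)"
    by (intro continuous_on_vec_lambda holomorphic_on_imp_continuous_on hz)
  then have uc: "continuous_on (ball 0 rz) z" by simp
  have op: "open (ball 0 rz \<inter> z -` ball 0 r)"
    by (rule continuous_open_preimage[OF uc]) auto
  have "0 \<in> ball 0 rz \<inter> z -` ball 0 r" using z0 rz r by auto
  then obtain r' where r': "r' > 0" and sub: "ball 0 r' \<subseteq> ball 0 rz \<inter> z -` ball 0 r"
    using op openE by blast
  show ?thesis
    by (intro exI[of _ "min r' rz"]) (use r' rz sub in auto)
qed

lemma vec_field_deriv:
  fixes z :: "complex \<Rightarrow> complex^'n"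
  assumes d: "\<And>j. ((\<lambda>t. z t $ j) has_field_derivative d j) (at t)"
  shows "(z has_derivative (\<lambda>h. h *s (\<chi> j. d j))) (at t)"
  unfolding has_derivative_at_within
proof
  have "linear (\<lambda>h::complex. h *s (\<chi> j. d j))"
    by (rule linearI) (simp_all add: vec_eq_iff vector_scaleR_component mult_scaleR_left algebra_simps)
  then show "bounded_linear (\<lambda>h::complex. h *s (\<chi> j. d j))"
    by (rule linear_conv_bounded_linear[THEN iffD1])
  have c: "((\<lambda>y. (z y $ j - z t $ j - d j * (y - t)) /\<^sub>R norm (y - t)) \<longlongrightarrow> 0) (at t)" for j
    using d[of j] unfolding has_field_derivative_def has_derivative_at_within by auto
  have "((\<lambda>y. \<chi> j. (z y $ j - z t $ j - d j * (y - t)) /\<^sub>R norm (y - t)) \<longlongrightarrow> (\<chi> j. 0)) (at t)"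
    by (intro tendsto_vec_lambda c)
  moreover have "(\<lambda>y. \<chi> j. (z y $ j - z t $ j - d j * (y - t)) /\<^sub>R norm (y - t)) =
       (\<lambda>y. (z y - z t - (y - t) *s (\<chi> j. d j)) /\<^sub>R norm (y - t))"
    by (auto simp: vec_eq_iff algebra_simps)
  moreover have "(\<chi> j. (0::complex)) = (0::complex^'n)" by (simp add: vec_eq_iff)
  ultimately show "((\<lambda>y. (z y - z t - (y - t) *s (\<chi> j. d j)) /\<^sub>R norm (y - t)) \<longlongrightarrow> 0) (at t within UNIV)"
    by simp
qed

lemma holo_compose:
  fixes z :: "complex \<Rightarrow> complex^'n"
  assumes a: "holo_near0 a" and z0: "z 0 = 0" and hz: "\<And>j. (\<lambda>t. z t $ j) holomorphic_on ball 0 rz" and rz: "rz > 0"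
  shows "\<exists>r>0. (\<lambda>t. a (z t)) holomorphic_on ball 0 r"
proof -
  obtain ra where ra: "ra > 0" and aD: "\<forall>x\<in>ball 0 ra. \<exists>D. (a has_derivative D) (at x) \<and> (\<forall>c v. D (c *s v) = c * D v)"
    using a unfolding holo_near0_def by blast
  obtain r where r: "r > 0" "r \<le> rz" and sm: "\<forall>t\<in>ball 0 r. z t \<in> ball 0 ra"
    using curve_small[OF z0 hz rz ra] by blast
  have "(\<lambda>t. a (z t)) field_differentiable (at t)" if t: "t \<in> ball 0 r" for t
  proof -
    obtain D where D: "(a has_derivative D) (at (z t))" and Dl: "\<forall>c v. D (c *s v) = c * D v"
      using aD sm t by blast
    have tz: "t \<in> ball 0 rz" using t r by auto
    have "((\<lambda>t. z t $ j) has_field_derivative deriv (\<lambda>t. z t $ j) t) (at t)" for j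
      by (rule holomorphic_derivI[OF hz open_ball tz])
    then have "(z has_derivative (\<lambda>h. h *s (\<chi> j. deriv (\<lambda>t. z t $ j) t))) (at t)"
      by (rule vec_field_deriv)
    then have "((a \<circ> z) has_derivative (D \<circ> (\<lambda>h. h *s (\<chi> j. deriv (\<lambda>t. z t $ j) t)))) (at t)"
      by (rule diff_chain_at) (rule D)
    then have 1: "((\<lambda>t. a (z t)) has_derivative (\<lambda>h. D (h *s (\<chi> j. deriv (\<lambda>t. z t $ j) t)))) (at t)"
      by (simp add: o_def)
    have 2: "(\<lambda>h. D (h *s (\<chi> j. deriv (\<lambda>t. z t $ j) t))) = (*) (D (\<chi> j. deriv (\<lambda>t. z t $ j) t))"
      by (auto simp: Dl mult.commute)
    have "((\<lambda>t. a (z t)) has_derivative (*) (D (\<chi> j. deriv (\<lambda>t. z t $ j) t))) (at t)"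
      using 1 unfolding 2 .
    then show ?thesis unfolding field_differentiable_def has_field_derivative_def by blast
  qed
  then have "(\<lambda>t. a (z t)) holomorphic_on ball 0 r"
    unfolding holomorphic_on_def using field_differentiable_at_within by blast
  then show ?thesis using r by blast
qed

lemma ideal_ordge:
  fixes z :: "complex \<Rightarrow> complex^'n"
  assumes z0: "z 0 = 0" and hz: "\<And>j. (\<lambda>t. z t $ j) holomorphic_on ball 0 rz" and rz: "rz > 0"
    and gen: "\<forall>k\<in>G. ordge (\<lambda>t. k (z t)) K" and h: "h \<in> gen_ideal G"
  shows "ordge (\<lambda>t. h (z t)) K"
proof -
  obtain gs as r where len: "length as = length gs" and gsG: "set gs \<subseteq> G" and ash: "\<forall>a\<in>set as. holo_near0 a"
     and r: "r > 0" and he: "\<forall>x\<in>ball 0 r. h x = (\<Sum>i<length gs. (as ! i) x * (gs ! i) x)"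
    using h unfolding gen_ideal_def by blast
  have A: "ordge (\<lambda>t. \<Sum>i<length gs. (as ! i) (z t) * (gs ! i) (z t)) K"
  proof (rule ordge_sum)
    fix i assume i: "i \<in> {..<length gs}"
    then have "holo_near0 (as ! i)" using ash len by auto
    then obtain ri where ri: "ri > 0" and hi: "(\<lambda>t. (as ! i) (z t)) holomorphic_on ball 0 ri"
      using holo_compose[OF _ z0 hz rz] by blast
    have "ordge (\<lambda>t. (gs ! i) (z t)) K" using gen gsG i by (metis lessThan_iff nth_mem subsetD)
    then show "ordge (\<lambda>t. (as ! i) (z t) * (gs ! i) (z t)) K"
      by (rule ordge_mult[OF _ ri hi])
  qed simp
  obtain r' where r': "r' > 0" "r' \<le> rz" and sm: "\<forall>t\<in>ball 0 r'. z t \<in> ball 0 r"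
    using curve_small[OF z0 hz rz r] by blast
  have B: "\<forall>t\<in>ball 0 r'. h (z t) = (\<Sum>i<length gs. (as ! i) (z t) * (gs ! i) (z t))"
    using he sm by blast
  show ?thesis by (rule ordge_cong[OF A r'(1) B])
qed

lemma key_identity:
  fixes a b c s \<psi> R :: complex
  assumes a: "a \<noteq> 0" and c: "c \<noteq> 0" and R: "R^2 = 1 - 4*b*c*\<psi>/a^2" and R1: "1 + R \<noteq> 0"
  shows "s^2*\<psi> - (-2*c* s*\<psi>/(a*(1+R))) * (-(a* s + b*(-2*c* s*\<psi>/(a*(1+R))))/c) = 0"
proof -
  define D where "D = a*(1+R)"
  define Z where "Z = -2*c* s*\<psi>/D"
  have D0: "D \<noteq> 0" using a R1 by (simp add: D_def)
  have ZD: "Z * D = -2*c* s*\<psi>" using D0 by (simp add: Z_def)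
  have e: "4*b*c*\<psi> = a^2 * (1 - R^2)" using R a by (simp add: field_simps)
  have "(c* s^2*\<psi> + Z*a* s + b*Z^2) * D^2 = c* s^2*\<psi>*D^2 + (Z*D)*a* s*D + b*(Z*D)^2"
    by (simp add: power2_eq_square algebra_simps)
  also have "\<dots> = c* s^2*\<psi>*(D^2 - 2*a*D + 4*b*c*\<psi>)"
    unfolding ZD by (simp add: power2_eq_square algebra_simps)
  also have "D^2 - 2*a*D + 4*b*c*\<psi> = 0"
    unfolding e D_def by (simp add: power2_eq_square algebra_simps)
  finally have "c* s^2*\<psi> + Z*a* s + b*Z^2 = 0" using D0 by simp
  then have "(c* s^2*\<psi> + Z*a* s + b*Z^2) / c = 0" by simp
  moreover have "(c* s^2*\<psi> + Z*a* s + b*Z^2) / c = s^2*\<psi> - Z * (-(a* s + b*Z)/c)"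
    using c by (simp add: field_simps power2_eq_square)
  ultimately have "s^2*\<psi> - Z * (-(a * s + b*Z)/c) = 0" by simp
  then show ?thesis unfolding Z_def D_def .
qed

lemma small_ball:
  assumes h: "u holomorphic_on ball 0 r" and r: "r > 0" and u0: "u 0 = 0" and rho: "\<rho> > 0"
  shows "\<exists>r'>0. r' \<le> r \<and> (\<forall>t\<in>ball 0 r'. u t \<in> ball 0 \<rho>)"
proof -
  have uc: "continuous_on (ball 0 r) u" using h by (rule holomorphic_on_imp_continuous_on)
  have op: "open (ball 0 r \<inter> u -` ball 0 \<rho>)"
    by (rule continuous_open_preimage[OF uc]) auto
  have "0 \<in> ball 0 r \<inter> u -` ball 0 \<rho>" using u0 r rho by auto
  then obtain r' where r': "r' > 0" and sub: "ball 0 r' \<subseteq> ball 0 r \<inter> u -` ball 0 \<rho>"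
    using op openE by blast
  show ?thesis
    by (intro exI[of _ "min r' r"]) (use r' r sub in auto)
qed

lemma lb_curve:
  fixes f :: "complex \<Rightarrow> complex"
  assumes a: "a \<noteq> 0" and c: "c \<noteq> 0" and p: "p \<ge> 3" and rf: "rf > 0"
    and phi: "\<phi> holomorphic_on ball 0 rf" and p0: "\<phi> 0 \<noteq> 0" and ffac: "\<forall>s\<in>ball 0 rf. f s = s^p * \<phi> s"
  shows "\<exists>rz>0. \<exists>Z2 Z3. Z2 holomorphic_on ball 0 rz \<and> Z3 holomorphic_on ball 0 rz \<and> Z2 0 = 0 \<and> Z3 0 = 0
     \<and> ordex Z2 (p-1) \<and> (\<forall>s\<in>ball 0 rz. f s - Z2 s * Z3 s = 0 \<and> a* s + b*Z2 s + c*Z3 s = 0)"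
proof -
  define \<psi> where "\<psi> s = s^(p-2) * \<phi> s" for s
  define \<epsilon> where "\<epsilon> s = 4*b*c*\<psi> s/a^2" for s
  have eh: "\<epsilon> holomorphic_on ball 0 rf" unfolding \<epsilon>_def \<psi>_def using phi by (auto intro!: holomorphic_intros)
  have e0: "\<epsilon> 0 = 0" using p by (simp add: \<epsilon>_def \<psi>_def)
  obtain r1 where r1: "r1 > 0" "r1 \<le> rf" and sm: "\<forall>t\<in>ball 0 r1. \<epsilon> t \<in> ball 0 1"
    using small_ball[OF eh rf e0, of 1] by auto
  define R where "R s = csqrt (1 - \<epsilon> s)" for s
  have nn: "1 - \<epsilon> s \<notin> \<real>\<^sub>\<le>\<^sub>0" if "s \<in> ball 0 r1" for s
  proof -
    have "norm (\<epsilon> s) < 1" using sm that by (simp add: dist_norm)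
    then have "Re (\<epsilon> s) < 1" using abs_Re_le_cmod[of "\<epsilon> s"] by linarith
    then show ?thesis by (simp add: complex_nonpos_Reals_iff)
  qed
  have Rh: "R holomorphic_on ball 0 r1" unfolding R_def
    by (intro holomorphic_on_csqrt' holomorphic_intros holomorphic_on_subset[OF eh] nn) (use r1 in auto)
  have R1: "1 + R s \<noteq> 0" for s
  proof
    assume "1 + R s = 0"
    then have "Re (1 + R s) = 0" by simp
    moreover have "Re (1 + R s) = 1 + Re (R s)" by simp
    moreover have "Re (R s) \<ge> 0" unfolding R_def by (rule Re_csqrt)
    ultimately show False by linarith
  qed
  have R2: "(R s)^2 = 1 - 4*b*c*\<psi> s/a^2" for s by (simp add: R_def \<epsilon>_def)
  have R0: "R 0 = 1" by (simp add: R_def e0)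
  define V where "V s = -2*c*\<phi> s/(a*(1+R s))" for s
  define Z2 where "Z2 s = -2*c* s*\<psi> s/(a*(1+R s))" for s
  define Z3 where "Z3 s = -(a* s + b*Z2 s)/c" for s
  have phi1: "\<phi> holomorphic_on ball 0 r1" using phi r1 by (intro holomorphic_on_subset[OF phi]) auto
  have Vh: "V holomorphic_on ball 0 r1" unfolding V_def
    using a R1 by (intro holomorphic_intros phi1 Rh) auto
  have Z2h: "Z2 holomorphic_on ball 0 r1" unfolding Z2_def \<psi>_def
    using a R1 by (intro holomorphic_intros phi1 Rh) auto
  have Z3h: "Z3 holomorphic_on ball 0 r1" unfolding Z3_def
    using c by (intro holomorphic_intros Z2h) auto
  have Z2V: "Z2 s = s^(p-1) * V s" for s
  proof -
    have pp: "p - 1 = Suc (p-2)" using p by simp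
    have sp: "-2*c* s*\<psi> s = s^(p-1) * (-2*c*\<phi> s)"
      unfolding pp \<psi>_def power_Suc by (simp only: mult_ac)
    have "Z2 s = (-2*c* s*\<psi> s)/(a*(1+R s))" by (simp add: Z2_def)
    also have "\<dots> = (s^(p-1) * (-2*c*\<phi> s))/(a*(1+R s))" by (simp only: sp)
    also have "\<dots> = s^(p-1) * V s" by (simp add: V_def)
    finally show ?thesis .
  qed
  have V0: "V 0 \<noteq> 0" using a c p0 R0 by (simp add: V_def)
  have "ordex Z2 (p-1)" unfolding ordex_def
    by (intro exI[of _ r1] conjI r1 exI[of _ V] Vh V0 ballI Z2V)
  moreover have "Z2 0 = 0" "Z3 0 = 0" by (simp_all add: Z2_def Z3_def)
  moreover have "\<forall>s\<in>ball 0 r1. f s - Z2 s * Z3 s = 0 \<and> a* s + b*Z2 s + c*Z3 s = 0"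
  proof
    fix s :: complex assume s: "s \<in> ball 0 r1"
    have pp: "p = 2 + (p - 2)" using p by simp
    have "f s = s^p * \<phi> s" using ffac s r1 by auto
    also have "\<dots> = s^(2 + (p-2)) * \<phi> s" using pp by simp
    also have "\<dots> = s^2 * \<psi> s" unfolding power_add \<psi>_def by (simp only: mult_ac)
    finally have "f s = s^2 * \<psi> s" .
    then have "f s - Z2 s * Z3 s = 0"
      unfolding Z3_def Z2_def using key_identity[OF a c R2 R1, of s] by simp
    moreover have "a* s + b*Z2 s + c*Z3 s = 0" using c by (simp add: Z3_def)
    ultimately show "f s - Z2 s * Z3 s = 0 \<and> a* s + b*Z2 s + c*Z3 s = 0" by blast
  qed
  ultimately show ?thesis using Z2h Z3h r1 by blast
qed

lemma linf_axis: "linf v (axis j 1) = v $ j"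
proof -
  have "(\<lambda>i. v $ i * axis j 1 $ i) = (\<lambda>i. if i = j then v $ j else 0)" by (auto simp: axis_def)
  then show ?thesis unfolding linf_def by (simp only:) simp
qed

lemma lin_indep1: "lin_indep 1 ws \<longleftrightarrow> ws 0 \<noteq> 0"
proof
  assume li: "lin_indep 1 ws"
  show "ws 0 \<noteq> 0"
  proof
    assume "ws 0 = 0"
    then have s0: "(\<Sum>i<1. (\<lambda>_. 1::complex) i *s ws i) = 0" by simp
    have h: "\<forall>c. (\<Sum>i<1. c i *s ws i) = 0 \<longrightarrow> (\<forall>i<1. c i = (0::complex))" using li unfolding lin_indep_def .
    have "(\<lambda>_. 1::complex) 0 = 0" using h[rule_format, OF s0, of 0] by simp
    then show False by simp
  qed
next
  assume nz: "ws 0 \<noteq> 0"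
  then obtain j where j: "ws 0 $ j \<noteq> 0" by (metis vec_eq_iff zero_index)
  show "lin_indep 1 ws" unfolding lin_indep_def
  proof (intro allI impI)
    fix c :: "nat \<Rightarrow> complex" and i :: nat assume "(\<Sum>i<1. c i *s ws i) = 0" and i: "i < 1"
    then have "c 0 *s ws 0 = 0" by simp
    then have "c 0 * ws 0 $ j = 0" by (metis vector_smult_component zero_index)
    then show "c i = 0" using j i by simp
  qed
qed

lemma zero_space1: "zero_space 1 ws = {x. linf (ws 0) x = 0}"
  unfolding zero_space_def by auto

definition W0 :: "(complex^3) set set" where
  "W0 = {H \<in> grass 1. axis 1 1 \<notin> H \<and> axis 3 1 \<notin> H}"

lemma zs_grass: "lin_indep 1 ws \<Longrightarrow> zero_space 1 ws \<in> grass 1"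
  unfolding grass_def by blast

lemma axis_in_zs: "axis j 1 \<in> zero_space 1 ws \<longleftrightarrow> ws 0 $ j = 0"
  unfolding zero_space1 by (simp add: linf_axis)

lemma in_W0: "lin_indep 1 ws \<Longrightarrow> zero_space 1 ws \<in> W0 \<longleftrightarrow> ws 0 $ 1 \<noteq> 0 \<and> ws 0 $ 3 \<noteq> 0"
  unfolding W0_def using zs_grass[of ws] axis_in_zs[of 1 ws] axis_in_zs[of 3 ws] by simp

lemma in_W0': "zero_space 1 ws \<in> W0 \<Longrightarrow> lin_indep 1 ws \<Longrightarrow> ws 0 $ 1 \<noteq> 0 \<and> ws 0 $ 3 \<noteq> 0"
  using in_W0 by blast

lemma prod_UNIV_3: "prod f (UNIV::3 set) = f 1 * f 2 * f 3"
  unfolding UNIV_3 by (simp add: ac_simps)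

definition P0 :: "(nat \<Rightarrow> complex^3) \<Rightarrow> complex" where
  "P0 ws = vec_nth (ws 0) 1 * vec_nth (ws 0) 3"

lemma P0_poly: "tuple_poly 1 P0"
  unfolding tuple_poly_def
proof (intro exI[of _ "{\<lambda>i j. if j = 1 \<or> j = 3 then 1 else 0}"] exI[of _ "\<lambda>_. 1"] conjI allI)
  fix ws :: "nat \<Rightarrow> complex^3"
  have n: "(2::3) \<noteq> 1" "(2::3) \<noteq> 3" by simp_all
  show "P0 ws = (\<Sum>\<alpha>\<in>{\<lambda>i j. if j = 1 \<or> j = 3 then 1 else 0}. 1 * (\<Prod>i<1. \<Prod>j\<in>UNIV. (ws i $ j) ^ (\<alpha> i j)))"
    by (simp add: prod_UNIV_3 P0_def n)
qed simp

lemma P0_iff: "(\<not> lin_indep 1 ws \<or> zero_space 1 ws \<notin> W0) \<longleftrightarrow> P0 ws = 0"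
proof (cases "lin_indep 1 ws")
  case True
  then show ?thesis using in_W0[OF True] by (simp add: P0_def)
next
  case False
  then have "ws 0 = 0" using lin_indep1 by blast
  then show ?thesis using False by (simp add: P0_def)
qed

lemma W0_open: "zariski_open_grass 1 W0"
  unfolding zariski_open_grass_def
proof (intro conjI exI[of _ "{P0}"])
  show "W0 \<subseteq> grass 1" unfolding W0_def by auto
  show "\<forall>P\<in>{P0}. tuple_poly 1 P" using P0_poly by simp
  show "\<forall>ws. (\<not> lin_indep 1 ws \<or> zero_space 1 ws \<notin> W0) = (\<forall>P\<in>{P0}. P ws = 0)"
    using P0_iff by simp
qed

lemma W0_ne: "W0 \<noteq> {}"
proof -
  define ws where "ws = (\<lambda>_::nat. axis 1 1 + axis 3 1 :: complex^3)"
  have "ws 0 $ 1 = 1" "ws 0 $ 3 = 1" by (simp_all add: ws_def axis_def)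
  moreover have "lin_indep 1 ws" unfolding lin_indep1
  proof
    assume "ws 0 = 0"
    then have "ws 0 $ 1 = 0" by simp
    then show False by (simp add: ws_def axis_def)
  qed
  ultimately have "zero_space 1 ws \<in> W0" using in_W0 by simp
  then show ?thesis by blast
qed

lemma generic_meet:
  fixes W' :: "(complex^3) set set"
  assumes ne: "W' \<noteq> {}" and op: "zariski_open_grass 1 W'"
  shows "\<exists>ws. lin_indep 1 ws \<and> zero_space 1 ws \<in> W' \<and> ws 0 $ 1 \<noteq> 0 \<and> ws 0 $ 3 \<noteq> 0"
proof -
  obtain F where Fp: "\<forall>P\<in>F. tuple_poly 1 P" and Fi: "\<forall>ws. (\<not> lin_indep 1 ws \<or> zero_space 1 ws \<notin> W') \<longleftrightarrow> (\<forall>P\<in>F. P ws = 0)"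
    and sub: "W' \<subseteq> grass 1"
    using op unfolding zariski_open_grass_def by blast
  obtain H where "H \<in> W'" using ne by blast
  then obtain ws' where li: "lin_indep 1 ws'" and H: "H = zero_space 1 ws'" using sub unfolding grass_def by blast
  then obtain P where P: "P \<in> F" "P ws' \<noteq> 0" using Fi \<open>H \<in> W'\<close> by blast
  obtain A cc where A: "finite A" and Pf: "\<forall>ws. P ws = (\<Sum>\<alpha>\<in>A. cc \<alpha> * (\<Prod>i<1. \<Prod>j\<in>UNIV. (ws i $ j) ^ (\<alpha> i j)))"
    using Fp P unfolding tuple_poly_def by blast
  define v :: "complex^3" where "v = axis 1 1 + axis 3 1"
  define wt where "wt t = (\<lambda>i. ws' i + complex_of_real t *s v)" for t
  define Q where "Q t = (\<Sum>\<alpha>\<in>A. cc \<alpha> * (\<Prod>i<1. \<Prod>j\<in>UNIV. (ws' i $ j + complex_of_real t * v $ j) ^ (\<alpha> i j)))" for t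
  have PQ: "P (wt t) = Q t" for t by (simp add: Pf Q_def wt_def)
  have "isCont Q 0" unfolding Q_def by (intro continuous_intros)
  moreover have "Q 0 \<noteq> 0" using P PQ[of 0] by (simp add: wt_def)
  ultimately obtain e where e: "e > 0" and eQ: "\<forall>y. dist 0 y < e \<longrightarrow> Q y \<noteq> 0"
    using continuous_at_avoid by blast
  have "infinite ({0<..<e} - {cmod (ws' 0 $ 1), cmod (ws' 0 $ 3)})"
    using e by (intro Diff_infinite_finite) auto
  then obtain t where t: "t \<in> {0<..<e}" "t \<noteq> cmod (ws' 0 $ 1)" "t \<noteq> cmod (ws' 0 $ 3)"
    using infinite_imp_nonempty by blast
  have v1: "v $ 1 = 1" "v $ 3 = 1" by (simp_all add: v_def axis_def)
  have a1: "wt t 0 $ 1 \<noteq> 0"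
  proof
    assume "wt t 0 $ 1 = 0"
    then have "ws' 0 $ 1 = - complex_of_real t" using v1 by (simp add: wt_def add_eq_0_iff)
    then show False using t by simp
  qed
  have a3: "wt t 0 $ 3 \<noteq> 0"
  proof
    assume "wt t 0 $ 3 = 0"
    then have "ws' 0 $ 3 = - complex_of_real t" using v1 by (simp add: wt_def add_eq_0_iff)
    then show False using t by simp
  qed
  have "P (wt t) \<noteq> 0" using PQ eQ t by simp
  then have "lin_indep 1 (wt t) \<and> zero_space 1 (wt t) \<in> W'" using Fi P(1) by blast
  then show ?thesis using a1 a3 by blast
qed

lemma beta_eq:
  assumes "\<forall>ws::nat \<Rightarrow> complex^3. lin_indep 1 ws \<and> ws 0 $ 1 \<noteq> 0 \<and> ws 0 $ 3 \<noteq> 0 \<longrightarrow> T1 (add_lin I 1 ws) = \<beta>"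
  shows "beta 2 (I :: (complex^3 \<Rightarrow> complex) set) = \<beta>"
  unfolding beta_def
proof (rule the_equality)
  show "is_generic_value 2 I \<beta>" unfolding is_generic_value_def
    using W0_ne W0_open in_W0' assms by (intro exI[of _ W0]) auto
  fix \<beta>' assume "is_generic_value 2 I \<beta>'"
  then obtain W' where "W' \<noteq> {}" "zariski_open_grass 1 W'"
    and W': "\<forall>ws. lin_indep 1 ws \<and> zero_space 1 ws \<in> W' \<longrightarrow> T1 (add_lin I 1 ws) = \<beta>'"
    unfolding is_generic_value_def by auto
  then obtain ws :: "nat \<Rightarrow> complex^3" where "lin_indep 1 ws" "zero_space 1 ws \<in> W'" "ws 0 $ 1 \<noteq> 0" "ws 0 $ 3 \<noteq> 0"
    using generic_meet by blast
  then show "\<beta>' = \<beta>" using W' assms by metis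
qed

lemma ord0_pos: assumes "u 0 = 0" shows "1 \<le> ord0 u"
proof (cases "\<exists>k. (deriv ^^ k) u 0 \<noteq> 0")
  case True
  then have "(deriv ^^ (LEAST k. (deriv ^^ k) u 0 \<noteq> 0)) u 0 \<noteq> 0" by (rule LeastI_ex)
  then have "(LEAST k. (deriv ^^ k) u 0 \<noteq> 0) \<noteq> 0" using assms by (metis funpow_0)
  then show ?thesis using True by (simp add: ord0_def one_enat_def)
qed (simp add: ord0_def)

lemma ordge_all: assumes "\<forall>M. enat M \<le> N \<longrightarrow> ordge u M" shows "N \<le> ord0 u"
proof (cases N)
  case (enat n)
  then show ?thesis using assms ord0_ge by auto
next
  case infinity
  have "enat M \<le> ord0 u" for M using assms ord0_ge infinity by auto
  then have "ord0 u = \<infinity>"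
    by (metis Suc_ile_eq enat_ord_simps(2) lessI not_infinity_eq not_le)
  then show ?thesis by simp
qed

lemma holo_const: "holo_near0 (\<lambda>_. c)"
  unfolding holo_near0_def by (intro exI[of _ 1]) (auto intro!: exI[of _ "\<lambda>_. 0"])

lemma holo_proj: "holo_near0 (\<lambda>x::complex^'n. x $ j)"
  unfolding holo_near0_def
  by (intro exI[of _ 1]) (auto intro!: exI[of _ "\<lambda>v. v $ j"] bounded_linear_imp_has_derivative)

lemma gen_mem: "k \<in> S \<Longrightarrow> k \<in> gen_ideal S"
  unfolding gen_ideal_def
  by (intro CollectI exI[of _ "[k]"] exI[of _ "[\<lambda>_. 1]"] conjI exI[of _ 1]) (auto simp: holo_const)

lemma gen_mem2:
  assumes "k1 \<in> S" "k2 \<in> S" "holo_near0 a"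
  shows "(\<lambda>x. k1 x + a x * k2 x) \<in> gen_ideal S"
  unfolding gen_ideal_def
  by (intro CollectI exI[of _ "[k1, k2]"] exI[of _ "[\<lambda>_. 1, a]"] conjI exI[of _ 1])
     (auto simp: lessThan_Suc assms holo_const)

lemma T1_ge:
  fixes J :: "(complex^'n \<Rightarrow> complex) set"
  assumes zc: "zc \<in> curves" and o1: "ordc zc = 1" and h: "\<forall>h\<in>J. N \<le> ord0 (h \<circ> zc)"
  shows "ereal_of_enat N \<le> T1 J"
proof -
  have "ereal_of_enat N \<le> (INF h\<in>J. ereal_of_enat (ord0 (h \<circ> zc)) / ereal_of_enat (ordc zc))"
  proof (rule INF_greatest)
    fix h assume "h \<in> J"
    then have "ereal_of_enat N \<le> ereal_of_enat (ord0 (h \<circ> zc))" using h by simp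
    moreover have "ereal_of_enat (ordc zc) = 1" using o1 by (simp add: one_enat_def one_ereal_def)
    ultimately show "ereal_of_enat N \<le> ereal_of_enat (ord0 (h \<circ> zc)) / ereal_of_enat (ordc zc)"
      by simp
  qed
  also have "\<dots> \<le> T1 J" unfolding T1_def by (rule SUP_upper[OF zc])
  finally show ?thesis .
qed

lemma T1_le:
  fixes J :: "(complex^'n \<Rightarrow> complex) set"
  assumes "\<forall>z\<in>curves. \<exists>h\<in>J. ereal_of_enat (ord0 (h \<circ> z)) / ereal_of_enat (ordc z) \<le> B"
  shows "T1 J \<le> B"
  unfolding T1_def
proof (rule SUP_least)
  fix z :: "complex \<Rightarrow> complex^'n" assume "z \<in> curves"
  then obtain h where "h \<in> J" "ereal_of_enat (ord0 (h \<circ> z)) / ereal_of_enat (ordc z) \<le> B" using assms by blast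
  then show "(INF h\<in>J. ereal_of_enat (ord0 (h \<circ> z)) / ereal_of_enat (ordc z)) \<le> B"
    by (meson INF_lower2)
qed

lemma ratio_le:
  assumes m: "m \<ge> 1" and x: "x \<le> enat (n*m)"
  shows "ereal_of_enat x / ereal_of_enat (enat m) \<le> ereal_of_enat (enat n)"
proof -
  obtain k where k: "x = enat k" "k \<le> n*m" using x by (cases x) auto
  have "real k / real m \<le> real n"
    using k m by (simp add: pos_divide_le_eq of_nat_mult[symmetric] del: of_nat_mult)
  then show ?thesis using k m by simp
qed

lemma curve_props:
  fixes z :: "complex \<Rightarrow> complex^3"
  assumes "z \<in> curves"
  obtains rz m where "rz > 0" "\<And>j. (\<lambda>t. z t $ j) holomorphic_on ball 0 rz" "z 0 = 0" "ordc z = enat m" "m \<ge> 1"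
     "\<And>j. enat m \<le> ord0 (\<lambda>t. z t $ j)" "\<exists>j. ord0 (\<lambda>t. z t $ j) = enat m"
proof -
  have z0: "z 0 = 0" and hol: "\<And>j. holo1_near0 (\<lambda>t. z t $ j)" and fin: "\<exists>j. ord0 (\<lambda>t. z t $ j) \<noteq> \<infinity>"
    using assms unfolding curves_def by auto
  obtain r1 where r1: "r1 > 0" "(\<lambda>t. z t $ 1) holomorphic_on ball 0 r1" using hol[of 1] unfolding holo1_near0_def by blast
  obtain r2 where r2: "r2 > 0" "(\<lambda>t. z t $ 2) holomorphic_on ball 0 r2" using hol[of 2] unfolding holo1_near0_def by blast
  obtain r3 where r3: "r3 > 0" "(\<lambda>t. z t $ 3) holomorphic_on ball 0 r3" using hol[of 3] unfolding holo1_near0_def by blast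
  define rz where "rz = min r1 (min r2 r3)"
  have rz: "rz > 0" using r1 r2 r3 by (simp add: rz_def)
  have hz: "(\<lambda>t. z t $ j) holomorphic_on ball 0 rz" for j
  proof -
    have "j = 1 \<or> j = 2 \<or> j = 3" using exhaust_3 by blast
    then show ?thesis
      by (elim disjE) (auto simp: rz_def intro: holomorphic_on_subset[OF r1(2)] holomorphic_on_subset[OF r2(2)] holomorphic_on_subset[OF r3(2)])
  qed
  define Ord where "Ord j = ord0 (\<lambda>t. z t $ j)" for j :: 3
  have fr: "finite (range Ord)" by simp
  have Mle: "ordc z \<le> Ord j" for j unfolding ordc_def Ord_def[symmetric] using fr by (intro Min_le) auto
  have Min: "ordc z \<in> range Ord" unfolding ordc_def Ord_def[symmetric] using fr by (intro Min_in) auto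
  obtain j0 where j0: "Ord j0 \<noteq> \<infinity>" using fin Ord_def by auto
  then obtain m where m: "ordc z = enat m" using Mle[of j0] by (cases "ordc z") auto
  have "1 \<le> Ord j" for j unfolding Ord_def by (rule ord0_pos) (simp add: z0)
  then have m1: "m \<ge> 1" using Min m by (metis enat_ord_simps(1) imageE one_enat_def)
  show ?thesis
  proof (rule that[OF rz hz z0 m m1])
    show "\<And>j. enat m \<le> ord0 (\<lambda>t. z t $ j)" using Mle m Ord_def by metis
    show "\<exists>j. ord0 (\<lambda>t. z t $ j) = enat m" using Min m Ord_def by auto
  qed
qed

lemma LB_from_curve:
  fixes zc :: "complex \<Rightarrow> complex^3" and ws :: "nat \<Rightarrow> complex^3"
  assumes zc: "zc \<in> curves" and o1: "ordc zc = 1" and rz: "rz > 0"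
    and hz: "\<And>j. (\<lambda>t. zc t $ j) holomorphic_on ball 0 rz" and z0: "zc 0 = 0"
    and gens: "\<And>M. enat M \<le> N \<Longrightarrow> ordge (\<lambda>t. k1 (zc t)) M \<and> ordge (\<lambda>t. k2 (zc t)) M \<and> ordge (\<lambda>t. linf (ws 0) (zc t)) M"
  shows "ereal_of_enat N \<le> T1 (add_lin (gen_ideal {k1, k2}) 1 ws)"
proof (rule T1_ge[OF zc o1], rule ballI)
  fix h assume h: "h \<in> add_lin (gen_ideal {k1, k2}) 1 ws"
  have "ordge (\<lambda>t. h (zc t)) M" if M: "enat M \<le> N" for M
  proof -
    have I: "\<forall>k\<in>gen_ideal {k1,k2}. ordge (\<lambda>t. k (zc t)) M"
      using ideal_ordge[OF z0 hz rz, of "{k1,k2}" M] gens[OF M] by blast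
    have "\<forall>k\<in>gen_ideal {k1, k2} \<union> {linf (ws i) |i. i < 1}. ordge (\<lambda>t. k (zc t)) M"
      using I gens[OF M] by auto
    then show ?thesis using ideal_ordge[OF z0 hz rz] h unfolding add_lin_def by blast
  qed
  then show "N \<le> ord0 (h \<circ> zc)" using ordge_all by (simp add: o_def)
qed

lemma ordex_id: "ordex (\<lambda>t. c * t) 1" if "c \<noteq> 0"
  unfolding ordex_def using that by (intro exI[of _ 1] conjI exI[of _ "\<lambda>_. c"]) auto

lemma ordc_one:
  fixes z :: "complex \<Rightarrow> complex^3"
  assumes "\<And>j. 1 \<le> ord0 (\<lambda>t. z t $ j)" and "ord0 (\<lambda>t. z t $ j0) = 1"
  shows "ordc z = 1"
  unfolding ordc_def
proof (rule antisym)
  show "Min (range (\<lambda>j. ord0 (\<lambda>t. z t $ j))) \<le> 1"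
    using assms(2) by (metis Min_le finite rangeI finite_imageI)
  show "1 \<le> Min (range (\<lambda>j. ord0 (\<lambda>t. z t $ j)))"
    using assms(1) by (subst Min_ge_iff) auto
qed

lemma ordge_zero_on: "r > 0 \<Longrightarrow> \<forall>t\<in>ball 0 r. u t = 0 \<Longrightarrow> ordge u M"
  using ordge_cong[OF ordge_zero] by blast

lemma g0: assumes "holo1_near0 g" "ord0 g \<ge> 1" shows "g 0 = 0"
proof -
  obtain r where r: "r > 0" "g holomorphic_on ball 0 r" using assms unfolding holo1_near0_def by blast
  have "ordge g 1" using ord0_fact[OF r] assms(2) by (simp add: one_enat_def)
  then show ?thesis unfolding ordge_def by force
qed

lemma ordge_g_comp:
  assumes hg: "holo1_near0 g" and Z: "ordge Z k" and k: "k \<ge> 1" and M: "enat M \<le> ord0 g * enat k"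
  shows "ordge (\<lambda>t. g (Z t)) M"
proof -
  obtain rg where rg: "rg > 0" "g holomorphic_on ball 0 rg" using hg unfolding holo1_near0_def by blast
  show ?thesis
  proof (cases "ord0 g")
    case (enat q)
    have "ordge g q" using ord0_fact[OF rg] enat by simp
    then have "ordge (\<lambda>t. g (Z t)) (q*k)" using ordge_compose Z k by simp
    moreover have "M \<le> q*k" using M enat by simp
    ultimately show ?thesis by (rule ordge_mono)
  next
    case infinity
    have "ordge g M" using ord0_fact[OF rg] infinity by simp
    then have "ordge (\<lambda>t. g (Z t)) (M*k)" using ordge_compose Z k by simp
    moreover have "M \<le> M*k" using k by simp
    ultimately show ?thesis by (rule ordge_mono)
  qed
qed

lemma LB:
  fixes f g :: "complex \<Rightarrow> complex" and ws :: "nat \<Rightarrow> complex^3"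
  assumes hf: "holo1_near0 f" and hg: "holo1_near0 g" and pf: "ord0 f \<ge> 3" and qg: "ord0 g \<ge> 2"
    and a: "ws 0 $ 1 \<noteq> 0" and c: "ws 0 $ 3 \<noteq> 0"
  shows "ereal_of_enat (ord0 g * (ord0 f - 1)) \<le>
     T1 (add_lin (gen_ideal {(\<lambda>x::complex^3. f (x $ 1) - x $ 2 * x $ 3), (\<lambda>x. g (x $ 2))}) 1 ws)"
proof (cases "ord0 f")
  case (enat p)
  have p3: "p \<ge> 3" using pf enat by (simp add: numeral_eq_enat)
  obtain rf0 where rf0: "rf0 > 0" "f holomorphic_on ball 0 rf0" using hf unfolding holo1_near0_def by blast
  have "ordex f p" by (rule ord0_exact[OF rf0 enat])
  then obtain rf \<phi> where rf: "rf > 0" and phi: "\<phi> holomorphic_on ball 0 rf" and p0: "\<phi> 0 \<noteq> 0"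
      and ffac: "\<forall>s\<in>ball 0 rf. f s = s^p * \<phi> s"
    unfolding ordex_def by blast
  obtain rz Z2 Z3 where rz: "rz > 0" and Z2h: "Z2 holomorphic_on ball 0 rz" and Z3h: "Z3 holomorphic_on ball 0 rz"
      and Z20: "Z2 0 = 0" and Z30: "Z3 0 = 0" and Z2o: "ordex Z2 (p-1)"
      and ids: "\<forall>s\<in>ball 0 rz. f s - Z2 s * Z3 s = 0 \<and> ws 0 $ 1 * s + ws 0 $ 2 * Z2 s + ws 0 $ 3 * Z3 s = 0"
    using lb_curve[OF a c p3 rf phi p0 ffac, of "ws 0 $ 2"] by blast
  define zc where "zc t = (vector [t, Z2 t, Z3 t] :: complex^3)" for t
  have c1: "(\<lambda>t. zc t $ 1) = (\<lambda>t. t)" and c2: "(\<lambda>t. zc t $ 2) = Z2" and c3: "(\<lambda>t. zc t $ 3) = Z3"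
    by (simp_all add: zc_def)
  have hz: "(\<lambda>t. zc t $ j) holomorphic_on ball 0 rz" for j
  proof -
    have "j = 1 \<or> j = 2 \<or> j = 3" using exhaust_3 by blast
    then show ?thesis using Z2h Z3h by (elim disjE) (simp_all add: c1 c2 c3)
  qed
  have z0: "zc 0 = 0" unfolding vec_eq_iff forall_3 using Z20 Z30 by (simp add: zc_def)
  have o1: "ord0 (\<lambda>t. zc t $ 1) = 1"
    unfolding c1 using ord0_ex[OF ordex_id[of 1]] by (simp add: one_enat_def)
  have oge: "1 \<le> ord0 (\<lambda>t. zc t $ j)" for j by (rule ord0_pos) (simp add: z0)
  have zcc: "zc \<in> curves" unfolding curves_def
  proof (intro CollectI conjI z0 allI exI[of _ 1])
    fix j show "holo1_near0 (\<lambda>t. zc t $ j)" unfolding holo1_near0_def using hz rz by blast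
  qed (simp add: o1)
  have ordc1: "ordc zc = 1" by (rule ordc_one[OF oge o1])
  show ?thesis
  proof (rule LB_from_curve[OF zcc ordc1 rz hz z0])
    fix M assume M: "enat M \<le> ord0 g * (ord0 f - 1)"
    have "ordge (\<lambda>t. f (zc t $ 1) - zc t $ 2 * zc t $ 3) M"
      by (rule ordge_zero_on[OF rz]) (use ids in \<open>simp add: zc_def\<close>)
    moreover have "ordge (\<lambda>t. linf (ws 0) (zc t)) M"
      by (rule ordge_zero_on[OF rz]) (use ids in \<open>simp add: zc_def linf_def sum_3\<close>)
    moreover have "ordge (\<lambda>t. g (zc t $ 2)) M"
    proof -
      have "ordge Z2 (p-1)" using Z2o by (rule ordex_imp_ordge)
      moreover have "enat M \<le> ord0 g * enat (p-1)" using M enat by (simp add: one_enat_def)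
      ultimately have "ordge (\<lambda>t. g (Z2 t)) M" using ordge_g_comp[OF hg] p3 by simp
      then show ?thesis by (simp add: zc_def)
    qed
    ultimately show "ordge (\<lambda>t. f (zc t $ 1) - zc t $ 2 * zc t $ 3) M \<and> ordge (\<lambda>t. g (zc t $ 2)) M \<and>
        ordge (\<lambda>t. linf (ws 0) (zc t)) M" by blast
  qed
next
  case infinity
  define \<kappa> where "\<kappa> = - (ws 0 $ 3 / ws 0 $ 1)"
  have k0: "\<kappa> \<noteq> 0" using a c by (simp add: \<kappa>_def)
  define zc where "zc t = (vector [\<kappa> * t, 0, t] :: complex^3)" for t
  have c1: "(\<lambda>t. zc t $ 1) = (\<lambda>t. \<kappa> * t)" and c2: "(\<lambda>t. zc t $ 2) = (\<lambda>_. 0)" and c3: "(\<lambda>t. zc t $ 3) = (\<lambda>t. t)"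
    by (simp_all add: zc_def)
  have hz: "(\<lambda>t. zc t $ j) holomorphic_on ball 0 1" for j
  proof -
    have "j = 1 \<or> j = 2 \<or> j = 3" using exhaust_3 by blast
    then show ?thesis by (elim disjE) (simp_all only: c1 c2 c3, auto intro!: holomorphic_intros)
  qed
  have z0: "zc 0 = 0" unfolding vec_eq_iff forall_3 by (simp add: zc_def)
  have o1: "ord0 (\<lambda>t. zc t $ 3) = 1"
    unfolding c3 using ord0_ex[OF ordex_id[of 1]] by (simp add: one_enat_def)
  have oge: "1 \<le> ord0 (\<lambda>t. zc t $ j)" for j by (rule ord0_pos) (simp add: z0)
  have zcc: "zc \<in> curves" unfolding curves_def
  proof (intro CollectI conjI z0 allI exI[of _ 3])
    fix j show "holo1_near0 (\<lambda>t. zc t $ j)" unfolding holo1_near0_def using hz by (intro exI[of _ 1]) auto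
  qed (simp add: o1)
  have ordc1: "ordc zc = 1" by (rule ordc_one[OF oge o1])
  have "(1::enat) \<le> 2" by simp
  then have "1 \<le> ord0 g" using qg by (rule order_trans)
  then have g00: "g 0 = 0" by (rule g0[OF hg])
  show ?thesis
  proof (rule LB_from_curve[OF zcc ordc1 _ hz z0])
    fix M assume M: "enat M \<le> ord0 g * (ord0 f - 1)"
    obtain rf where rf: "rf > 0" "f holomorphic_on ball 0 rf" using hf unfolding holo1_near0_def by blast
    have fM: "ordge f M" using ord0_fact[OF rf] infinity by simp
    have "ordge (\<lambda>t. f (\<kappa> * t)) (M*1)"
      by (rule ordge_compose[OF fM ordex_imp_ordge[OF ordex_id[OF k0]]]) simp
    then have "ordge (\<lambda>t. f (zc t $ 1) - zc t $ 2 * zc t $ 3) M"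
      by (simp add: zc_def)
    moreover have "ordge (\<lambda>t. linf (ws 0) (zc t)) M"
      by (rule ordge_zero_on[of 1]) (use a in \<open>simp_all add: zc_def linf_def sum_3 \<kappa>_def\<close>)
    moreover have "ordge (\<lambda>t. g (zc t $ 2)) M"
      by (rule ordge_zero_on[of 1]) (simp_all add: zc_def g00)
    ultimately show "ordge (\<lambda>t. f (zc t $ 1) - zc t $ 2 * zc t $ 3) M \<and> ordge (\<lambda>t. g (zc t $ 2)) M \<and>
        ordge (\<lambda>t. linf (ws 0) (zc t)) M" by blast
  qed simp
qed

lemma ordex_cong:
  assumes "ordex u K" "r > 0" "\<forall>t\<in>ball 0 r. u' t = u t" shows "ordex u' K"
proof -
  obtain r1 v where r1: "r1 > 0" and v: "v holomorphic_on ball 0 r1" and v0: "v 0 \<noteq> 0" and u: "\<forall>t\<in>ball 0 r1. u t = t^K * v t"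
    using assms unfolding ordex_def by blast
  show ?thesis unfolding ordex_def
    by (intro exI[of _ "min r r1"] conjI exI[of _ v] ballI v0)
       (use assms r1 u in \<open>auto intro: holomorphic_on_subset[OF v]\<close>)
qed

lemma ordge_cmult: "ordge A n \<Longrightarrow> ordge (\<lambda>t. c * A t) n"
  using ordge_mult[of A n 1 "\<lambda>_. c"] by (simp add: holomorphic_intros)

lemma ordex_cmult:
  assumes "ordex A n" "c \<noteq> 0" shows "ordex (\<lambda>t. c * A t) n"
proof -
  obtain r v where r: "r > 0" and v: "v holomorphic_on ball 0 r" and v0: "v 0 \<noteq> 0" and u: "\<forall>t\<in>ball 0 r. A t = t^n * v t"
    using assms unfolding ordex_def by blast
  show ?thesis unfolding ordex_def
    by (intro exI[of _ r] conjI r exI[of _ "\<lambda>t. c * v t"] ballI)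
       (use v v0 u assms(2) in \<open>auto intro!: holomorphic_intros simp: algebra_simps\<close>)
qed

lemma ordge_times:
  assumes "ordge A n" "ordge B k" shows "ordge (\<lambda>t. A t * B t) (n+k)"
proof -
  obtain r1 v where r1: "r1 > 0" and v: "v holomorphic_on ball 0 r1" and u: "\<forall>t\<in>ball 0 r1. A t = t^n * v t"
    using assms unfolding ordge_def by blast
  obtain r2 w where r2: "r2 > 0" and w: "w holomorphic_on ball 0 r2" and u2: "\<forall>t\<in>ball 0 r2. B t = t^k * w t"
    using assms unfolding ordge_def by blast
  show ?thesis unfolding ordge_def
  proof (intro exI[of _ "min r1 r2"] conjI exI[of _ "\<lambda>t. v t * w t"] ballI)
    show "(\<lambda>t. v t * w t) holomorphic_on ball 0 (min r1 r2)"
      by (intro holomorphic_intros holomorphic_on_subset[OF v] holomorphic_on_subset[OF w]) auto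
    fix t :: complex assume "t \<in> ball 0 (min r1 r2)"
    then show "A t * B t = t^(n+k) * (v t * w t)" using u u2 by (simp add: power_add algebra_simps)
  qed (use r1 r2 in auto)
qed

lemma ordex_add_higher:
  assumes "ordex A n" "ordge B (Suc n)" shows "ordex (\<lambda>t. A t + B t) n"
proof -
  obtain r1 v where r1: "r1 > 0" and v: "v holomorphic_on ball 0 r1" and v0: "v 0 \<noteq> 0" and u: "\<forall>t\<in>ball 0 r1. A t = t^n * v t"
    using assms unfolding ordex_def by blast
  obtain r2 w where r2: "r2 > 0" and w: "w holomorphic_on ball 0 r2" and u2: "\<forall>t\<in>ball 0 r2. B t = t^(Suc n) * w t"
    using assms unfolding ordge_def by blast
  show ?thesis unfolding ordex_def
  proof (intro exI[of _ "min r1 r2"] conjI exI[of _ "\<lambda>t. v t + t * w t"] ballI)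
    show "(\<lambda>t. v t + t * w t) holomorphic_on ball 0 (min r1 r2)"
      by (intro holomorphic_intros holomorphic_on_subset[OF v] holomorphic_on_subset[OF w]) auto
    show "v 0 + 0 * w 0 \<noteq> 0" using v0 by simp
    fix t :: complex assume "t \<in> ball 0 (min r1 r2)"
    then show "A t + B t = t^n * (v t + t * w t)" using u u2 by (simp add: algebra_simps)
  qed (use r1 r2 in auto)
qed

lemma linf_e: "linf (axis k 1) x = x $ k"
proof -
  have "(\<lambda>i. axis k 1 $ i * x $ i) = (\<lambda>i. if i = k then x $ k else 0)" by (auto simp: axis_def)
  then show ?thesis unfolding linf_def by (simp only:) simp
qed

lemma linf3: "linf v (x::complex^3) = v $ 1 * x $ 1 + v $ 2 * x $ 2 + v $ 3 * x $ 3"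
  unfolding linf_def sum_3 by simp

lemma ord_gt: "\<not> ord0 u \<le> enat k \<Longrightarrow> enat (Suc k) \<le> ord0 u"
  by (metis Suc_ile_eq not_le)

lemma UB:
  fixes f g :: "complex \<Rightarrow> complex" and ws :: "nat \<Rightarrow> complex^3"
  assumes hf: "holo1_near0 f" and hg: "holo1_near0 g" and p: "ord0 f = enat p" and q: "ord0 g = enat q"
    and p3: "p \<ge> 3" and q2: "q \<ge> 2" and a: "ws 0 $ 1 \<noteq> 0" and c: "ws 0 $ 3 \<noteq> 0"
  shows "T1 (add_lin (gen_ideal {(\<lambda>x::complex^3. f (x $ 1) - x $ 2 * x $ 3), (\<lambda>x. g (x $ 2))}) 1 ws)
           \<le> ereal_of_enat (enat (q*(p-1)))"
proof (rule T1_le, rule ballI)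
  fix z :: "complex \<Rightarrow> complex^3" assume zc: "z \<in> curves"
  obtain rz m where rz: "rz > 0" and hz: "\<And>j. (\<lambda>t. z t $ j) holomorphic_on ball 0 rz" and z0: "z 0 = 0"
     and om: "ordc z = enat m" and m1: "m \<ge> 1" and mle: "\<And>j. enat m \<le> ord0 (\<lambda>t. z t $ j)"
     and mex: "\<exists>j. ord0 (\<lambda>t. z t $ j) = enat m"
    by (rule curve_props[OF zc]) blast
  define Fg where "Fg = (\<lambda>x::complex^3. f (x $ 1) - x $ 2 * x $ 3)"
  define Gg where "Gg = (\<lambda>x::complex^3. g (x $ 2))"
  define J where "J = add_lin (gen_ideal {Fg, Gg}) 1 ws"
  have FJ: "Fg \<in> J" unfolding J_def add_lin_def by (intro gen_mem UnI1 gen_mem) simp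
  have GJ: "Gg \<in> J" unfolding J_def add_lin_def by (intro gen_mem UnI1 gen_mem) simp
  have wJ: "linf (ws 0) \<in> J" unfolding J_def add_lin_def by (intro gen_mem UnI2) auto
  obtain rf where rf: "rf > 0" "f holomorphic_on ball 0 rf" using hf unfolding holo1_near0_def by blast
  obtain rg where rg: "rg > 0" "g holomorphic_on ball 0 rg" using hg unfolding holo1_near0_def by blast
  have fex: "ordex f p" by (rule ord0_exact[OF rf p])
  have gex: "ordex g q" by (rule ord0_exact[OF rg q])
  define u1 where "u1 = (\<lambda>t. z t $ 1)"
  define u2 where "u2 = (\<lambda>t. z t $ 2)"
  define u3 where "u3 = (\<lambda>t. z t $ 3)"
  define \<omega> where "\<omega> = (\<lambda>t. linf (ws 0) (z t))"
  have h1: "u1 holomorphic_on ball 0 rz" using hz[of 1] by (simp add: u1_def)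
  have h2: "u2 holomorphic_on ball 0 rz" using hz[of 2] by (simp add: u2_def)
  have h3: "u3 holomorphic_on ball 0 rz" using hz[of 3] by (simp add: u3_def)
  have \<omega>e: "\<omega> t = ws 0 $ 1 * u1 t + ws 0 $ 2 * u2 t + ws 0 $ 3 * u3 t" for t
    by (simp add: \<omega>_def linf3 u1_def u2_def u3_def)
  have h\<omega>: "\<omega> holomorphic_on ball 0 rz" unfolding \<omega>e[abs_def] using h1 h2 h3 by (intro holomorphic_intros)
  have m1': "m \<le> ord0 u1" "m \<le> ord0 u2" "m \<le> ord0 u3" using mle unfolding u1_def u2_def u3_def by blast+
  have qp: "1 \<le> q*(p-1)" using p3 q2 by simp
  have "\<exists>h\<in>J. ord0 (h \<circ> z) \<le> enat (q*(p-1)*m)"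
  proof (cases "ord0 u2 \<le> enat ((p-1)*m)")
    case True
    then obtain k2 where k2: "ord0 u2 = enat k2" "k2 \<le> (p-1)*m" by (cases "ord0 u2") auto
    have k21: "k2 > 0" using m1'(2) k2 m1 by simp
    have "ordex u2 k2" by (rule ord0_exact[OF rz h2 k2(1)])
    then have "ordex (\<lambda>t. g (u2 t)) (q*k2)" by (rule ordex_compose[OF gex _ k21])
    then have "ord0 (Gg \<circ> z) = enat (q*k2)" using ord0_ex by (simp add: Gg_def u2_def o_def)
    moreover have "q*k2 \<le> q*(p-1)*m" using k2(2) by (simp add: mult.assoc)
    ultimately show ?thesis using GJ by force
  next
    case False
    note u2big = ord_gt[OF False]
    show ?thesis
    proof (cases "ord0 \<omega> \<le> enat m")
      case True
      have "ord0 (linf (ws 0) \<circ> z) \<le> enat m" using True by (simp add: \<omega>_def o_def)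
      also have "enat m \<le> enat (q*(p-1)*m)" using qp by simp
      finally show ?thesis using wJ by blast
    next
      case False
      have \<omega>g: "ordge \<omega> (Suc m)" by (rule ord0_fact[OF rz h\<omega> ord_gt[OF False]])
      have u2g: "ordge u2 (Suc ((p-1)*m))" by (rule ord0_fact[OF rz h2 u2big])
      have p1: "1 \<le> p - 1" using p3 by arith
      have mm: "m \<le> (p-1)*m" using mult_le_mono1[OF p1, of m] by simp
      have u2g': "ordge u2 (Suc m)" by (rule ordge_mono[OF u2g]) (use mm in simp)
      have u1e: "u1 t = (1/ws 0 $ 1) * \<omega> t + (-ws 0 $ 2/ws 0 $ 1) * u2 t + (-ws 0 $ 3/ws 0 $ 1) * u3 t" for t
        using a by (simp add: \<omega>e field_simps)
      have u3m: "ord0 u3 = enat m"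
      proof (rule ccontr)
        assume ne: "ord0 u3 \<noteq> enat m"
        then have "\<not> ord0 u3 \<le> enat m" using m1'(3) by simp
        then have u3g: "ordge u3 (Suc m)" by (rule ord0_fact[OF rz h3 ord_gt])
        have "ordge (\<lambda>t. (1/ws 0 $ 1) * \<omega> t + (-ws 0 $ 2/ws 0 $ 1) * u2 t + (-ws 0 $ 3/ws 0 $ 1) * u3 t) (Suc m)"
          by (intro ordge_add ordge_cmult \<omega>g u2g' u3g)
        then have "ordge u1 (Suc m)" by (rule ordge_cong[of _ _ 1]) (simp_all add: u1e)
        then have o1: "enat (Suc m) \<le> ord0 u1" by (rule ord0_ge)
        have "enat (Suc m) \<le> enat (Suc ((p-1)*m))" using mm by simp
        then have o2: "enat (Suc m) \<le> ord0 u2" using u2big by (rule order_trans)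
        obtain j where "ord0 (\<lambda>t. z t $ j) = enat m" using mex by blast
        moreover have "j = 1 \<or> j = 2 \<or> j = 3" using exhaust_3 by blast
        ultimately show False using o1 o2 ne unfolding u1_def u2_def u3_def by auto
      qed
      have u3e: "ordex u3 m" by (rule ord0_exact[OF rz h3 u3m])
      have "ordex (\<lambda>t. (-ws 0 $ 3/ws 0 $ 1) * u3 t + ((1/ws 0 $ 1) * \<omega> t + (-ws 0 $ 2/ws 0 $ 1) * u2 t)) m"
        by (intro ordex_add_higher ordex_cmult u3e ordge_add ordge_cmult \<omega>g u2g') (use a c in simp)
      then have u1x: "ordex u1 m"
        by (rule ordex_cong[of _ _ 1]) (simp_all add: u1e algebra_simps)
      have fu1: "ordex (\<lambda>t. f (u1 t)) (p*m)" by (rule ordex_compose[OF fex u1x]) (use m1 in simp)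
      have "ordge (\<lambda>t. u2 t * u3 t) (Suc ((p-1)*m) + m)"
        by (rule ordge_times[OF u2g ordex_imp_ordge[OF u3e]])
      moreover have "Suc ((p-1)*m) + m = Suc (p*m)"
      proof -
        obtain p' where pp: "p = Suc p'" using p3 by (cases p) auto
        then show ?thesis by simp
      qed
      ultimately have "ordge (\<lambda>t. u2 t * u3 t) (Suc (p*m))" by simp
      then have "ordge (\<lambda>t. -1 * (u2 t * u3 t)) (Suc (p*m))" by (rule ordge_cmult)
      then have "ordex (\<lambda>t. f (u1 t) + -1 * (u2 t * u3 t)) (p*m)" by (rule ordex_add_higher[OF fu1])
      then have "ordex (Fg \<circ> z) (p*m)"
        by (rule ordex_cong[of _ _ 1]) (simp_all add: Fg_def u1_def u2_def u3_def)
      then have "ord0 (Fg \<circ> z) = enat (p*m)" by (rule ord0_ex)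
      moreover have "p*m \<le> q*(p-1)*m"
      proof -
        have "p \<le> q*(p-1)" using p3 q2
        proof -
          have "p \<le> 2*(p-1)" using p3 by simp
          also have "\<dots> \<le> q*(p-1)" using q2 by simp
          finally show ?thesis .
        qed
        then show ?thesis by simp
      qed
      ultimately show ?thesis using FJ by force
    qed
  qed
  then obtain h where hJ: "h \<in> J" and hle: "ord0 (h \<circ> z) \<le> enat (q*(p-1)*m)" by blast
  show "\<exists>h\<in>add_lin (gen_ideal {\<lambda>x. f (x $ 1) - x $ 2 * x $ 3, \<lambda>x. g (x $ 2)}) 1 ws.
          ereal_of_enat (ord0 (h \<circ> z)) / ereal_of_enat (ordc z) \<le> ereal_of_enat (enat (q*(p-1)))"
    unfolding om using ratio_le[OF m1 hle] hJ unfolding J_def Fg_def Gg_def by blast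
qed

lemma UB3:
  fixes f g :: "complex \<Rightarrow> complex"
  assumes hf: "holo1_near0 f" and hg: "holo1_near0 g" and pf: "ord0 f \<ge> 3" and qg: "ord0 g \<ge> 2"
  shows "T1 (add_lin (gen_ideal {(\<lambda>x::complex^3. f (x $ 1) - x $ 2 * x $ 3), (\<lambda>x. g (x $ 2))}) 1 (\<lambda>_. axis 3 1))
           \<le> ereal_of_enat (max (ord0 f) (ord0 g))"
proof (cases "ord0 f = \<infinity> \<or> ord0 g = \<infinity>")
  case True
  then have "max (ord0 f) (ord0 g) = \<infinity>" by auto
  then show ?thesis by simp
next
  case False
  then obtain p q where p: "ord0 f = enat p" and q: "ord0 g = enat q" by auto
  have p1: "p \<ge> 1" using pf p by (simp add: numeral_eq_enat)
  have q1: "q \<ge> 1" using qg q by (simp add: numeral_eq_enat)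
  have mx: "max (ord0 f) (ord0 g) = enat (max p q)" using p q by (simp add: max_def)
  obtain rf where rf: "rf > 0" "f holomorphic_on ball 0 rf" using hf unfolding holo1_near0_def by blast
  obtain rg where rg: "rg > 0" "g holomorphic_on ball 0 rg" using hg unfolding holo1_near0_def by blast
  have fex: "ordex f p" by (rule ord0_exact[OF rf p])
  have gex: "ordex g q" by (rule ord0_exact[OF rg q])
  define Fg where "Fg = (\<lambda>x::complex^3. f (x $ 1) - x $ 2 * x $ 3)"
  define Gg where "Gg = (\<lambda>x::complex^3. g (x $ 2))"
  define J where "J = add_lin (gen_ideal {Fg, Gg}) 1 (\<lambda>_::nat. axis 3 1 :: complex^3)"
  have FJ0: "Fg \<in> gen_ideal {Fg, Gg} \<union> {linf ((\<lambda>_::nat. axis 3 1 :: complex^3) i) |i. i < 1}"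
    by (intro gen_mem UnI1 gen_mem) simp
  have wJ0: "linf (axis 3 1 :: complex^3) \<in> gen_ideal {Fg, Gg} \<union> {linf ((\<lambda>_::nat. axis 3 1 :: complex^3) i) |i. i < 1}"
    by (intro UnI2) auto
  have GJ: "Gg \<in> J" unfolding J_def add_lin_def by (intro gen_mem UnI1 gen_mem) simp
  have wJ: "linf (axis 3 1) \<in> J" unfolding J_def add_lin_def by (rule gen_mem[OF wJ0])
  have HJ: "(\<lambda>x. Fg x + x $ 2 * linf (axis 3 1) x) \<in> J" unfolding J_def add_lin_def
    by (rule gen_mem2[OF FJ0 wJ0 holo_proj])
  show ?thesis unfolding mx
  proof (rule T1_le, rule ballI)
    fix z :: "complex \<Rightarrow> complex^3" assume zc: "z \<in> curves"
    obtain rz m where rz: "rz > 0" and hz: "\<And>j. (\<lambda>t. z t $ j) holomorphic_on ball 0 rz" and z0: "z 0 = 0"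
       and om: "ordc z = enat m" and m1: "m \<ge> 1" and mle: "\<And>j. enat m \<le> ord0 (\<lambda>t. z t $ j)"
       and mex: "\<exists>j. ord0 (\<lambda>t. z t $ j) = enat m"
      by (rule curve_props[OF zc]) blast
    obtain j where j: "ord0 (\<lambda>t. z t $ j) = enat m" using mex by blast
    have jx: "ordex (\<lambda>t. z t $ j) m" by (rule ord0_exact[OF rz hz j])
    have "\<exists>h\<in>J. ord0 (h \<circ> z) \<le> enat (max p q * m)"
    proof -
      have "j = 1 \<or> j = 2 \<or> j = 3" using exhaust_3 by blast
      then show ?thesis
      proof (elim disjE)
        assume j1: "j = 1"
        have "ordex (\<lambda>t. f (z t $ 1)) (p*m)" using ordex_compose[OF fex jx] m1 j1 by simp
        then have "ord0 ((\<lambda>x. Fg x + x $ 2 * linf (axis 3 1) x) \<circ> z) = enat (p*m)"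
          using ord0_ex by (simp add: o_def Fg_def linf_e)
        moreover have "p*m \<le> max p q * m" by simp
        ultimately show ?thesis using HJ by force
      next
        assume j2: "j = 2"
        have "ordex (\<lambda>t. g (z t $ 2)) (q*m)" using ordex_compose[OF gex jx] m1 j2 by simp
        then have "ord0 (Gg \<circ> z) = enat (q*m)" using ord0_ex by (simp add: o_def Gg_def)
        moreover have "q*m \<le> max p q * m" by simp
        ultimately show ?thesis using GJ by force
      next
        assume j3: "j = 3"
        have "ord0 (linf (axis 3 1) \<circ> z) = enat m" using j j3 by (simp add: o_def linf_e)
        moreover have "m \<le> max p q * m" using p1 by (simp add: le_max_iff_disj)
        ultimately show ?thesis using wJ by force
      qed
    qed
    then obtain h where hJ: "h \<in> J" and hle: "ord0 (h \<circ> z) \<le> enat (max p q * m)" by blast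
    show "\<exists>h\<in>add_lin (gen_ideal {\<lambda>x. f (x $ 1) - x $ 2 * x $ 3, \<lambda>x. g (x $ 2)}) 1 (\<lambda>_. axis 3 1).
            ereal_of_enat (ord0 (h \<circ> z)) / ereal_of_enat (ordc z) \<le> ereal_of_enat (enat (max p q))"
      unfolding om using ratio_le[OF m1 hle] hJ unfolding J_def Fg_def Gg_def by blast
  qed
qed

lemma max_eq:
  fixes p q :: enat
  assumes "p \<ge> 3" "q \<ge> 2"
  shows "max p (q * (p - 1)) = q * (p - 1)"
proof (cases p)
  case (enat p')
  then have p3: "p' \<ge> 3" using assms by (simp add: numeral_eq_enat)
  show ?thesis
  proof (cases q)
    case (enat q')
    then have "q' \<ge> 2" using assms by (simp add: numeral_eq_enat)
    moreover have "p' \<le> 2*(p'-1)" using p3 by simp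
    ultimately have "p' \<le> q'*(p'-1)" by (meson le_trans mult_le_mono1)
    then show ?thesis using \<open>p = enat p'\<close> enat by (simp add: one_enat_def max_def)
  next
    case infinity
    have "p - 1 \<noteq> 0" using p3 enat by (simp add: one_enat_def zero_enat_def)
    then have "\<infinity> * (p - 1) = \<infinity>" using imult_is_infinity by blast
    then show ?thesis using infinity by simp
  qed
next
  case infinity
  have "q \<noteq> 0" using assms by (metis not_numeral_le_zero zero_le_numeral order.trans order_antisym)
  have "p - 1 = \<infinity>" using infinity by simp
  then have "q * (p - 1) = \<infinity>" using \<open>q \<noteq> 0\<close> imult_is_infinity by blast
  then show ?thesis by simp
qed

theorem mainTheorem9:
  fixes f g :: "complex \<Rightarrow> complex"
  assumes "holo1_near0 f" and "holo1_near0 g"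
    and "ord0 f \<ge> 3" and "ord0 g \<ge> 2"
  defines "I \<equiv> gen_ideal {(\<lambda>x::complex^3. f (x $ 1) - x $ 2 * x $ 3), (\<lambda>x. g (x $ 2))}"
  shows "Tq 2 I \<le> ereal_of_enat (max (ord0 f) (ord0 g))
    \<and> beta 2 I = ereal_of_enat (max (ord0 f) (ord0 g * (ord0 f - 1)))
    \<and> max (ord0 f) (ord0 g * (ord0 f - 1)) = ord0 g * (ord0 f - 1)"
proof -
  note hf = assms(1) and hg = assms(2) and pf = assms(3) and qg = assms(4)
  have third: "max (ord0 f) (ord0 g * (ord0 f - 1)) = ord0 g * (ord0 f - 1)"
    by (rule max_eq[OF pf qg])
  have T1eq: "\<forall>ws::nat \<Rightarrow> complex^3. lin_indep 1 ws \<and> ws 0 $ 1 \<noteq> 0 \<and> ws 0 $ 3 \<noteq> 0 \<longrightarrow>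
      T1 (add_lin I 1 ws) = ereal_of_enat (ord0 g * (ord0 f - 1))"
  proof (intro allI impI)
    fix ws :: "nat \<Rightarrow> complex^3"
    assume "lin_indep 1 ws \<and> ws 0 $ 1 \<noteq> 0 \<and> ws 0 $ 3 \<noteq> 0"
    then have a: "ws 0 $ 1 \<noteq> 0" and c: "ws 0 $ 3 \<noteq> 0" by auto
    have lb: "ereal_of_enat (ord0 g * (ord0 f - 1)) \<le> T1 (add_lin I 1 ws)"
      unfolding I_def by (rule LB[where f=f and g=g and ws=ws, OF hf hg pf qg a c])
    show "T1 (add_lin I 1 ws) = ereal_of_enat (ord0 g * (ord0 f - 1))"
    proof (cases "ord0 f = \<infinity> \<or> ord0 g = \<infinity>")
      case True
      have "ord0 g \<noteq> 0" using qg by (metis not_numeral_le_zero zero_le_numeral order.trans order_antisym)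
      moreover have "ord0 f - 1 \<noteq> 0"
      proof (cases "ord0 f")
        case (enat p) then show ?thesis using pf by (simp add: numeral_eq_enat one_enat_def zero_enat_def)
      qed simp
      ultimately have "ord0 g * (ord0 f - 1) = \<infinity>" using True imult_is_infinity by auto
      then show ?thesis using lb by simp
    next
      case False
      then obtain p q where p: "ord0 f = enat p" and q: "ord0 g = enat q" by auto
      have p3: "p \<ge> 3" using pf p by (simp add: numeral_eq_enat)
      have q2: "q \<ge> 2" using qg q by (simp add: numeral_eq_enat)
      have e: "ord0 g * (ord0 f - 1) = enat (q*(p-1))" using p q by (simp add: one_enat_def)
      have "T1 (add_lin I 1 ws) \<le> ereal_of_enat (enat (q*(p-1)))"
        unfolding I_def by (rule UB[where f=f and g=g and ws=ws, OF hf hg p q p3 q2 a c])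
      then show ?thesis using lb e by simp
    qed
  qed
  have beta: "beta 2 I = ereal_of_enat (ord0 g * (ord0 f - 1))" by (rule beta_eq[OF T1eq])
  have "Tq 2 I \<le> T1 (add_lin I 1 (\<lambda>_. axis 3 1))"
    unfolding Tq_def by (rule INF_lower2[where i="\<lambda>_::nat. axis 3 1 :: complex^3", OF UNIV_I]) simp
  also have "\<dots> \<le> ereal_of_enat (max (ord0 f) (ord0 g))"
    unfolding I_def by (rule UB3[where f=f and g=g, OF hf hg pf qg])
  finally show ?thesis using beta third by simp
qed

end
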